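(* Let $n\ge 1$, $k>0$, and let $P\in\mathscr P_n$ have no zero in the disk $|z|<k$. Let $Q(z)=z^n\overline{P(1/\overline{z})}$. Then for all $\alpha,\beta\in\mathbb C$ with $|\alpha|\le1$, $|\beta|\le1$, all $R>r\ge k$ and all $|z|\ge1$, $$\big|B[P\circ\sigma](z)+\Phi_k(R,r,\alpha,\beta)B[P\circ\rho](z)\big|\le k^n\big|B[Q\circ\tau](z)+\Phi_k(R,r,\alpha,\beta)B[Q\circ\eta](z)\big|.$$
   Context: For an integer $n\ge1$, $\mathscr P_n$ denotes the set of complex polynomials of degree at most $n$. Fix complex numbers $\lambda_0,\lambda_1,\lambda_2$ such that all zeros of $U(z)=\lambda_0+n\lambda_1 z+\frac{n(n-1)}{2}\lambda_2 z^2$ lie in the half-plane $\{z\in\mathbb C:|z|\le|z-n/2|\}$. The operator $B$ (of the class $\mathcal B_n$) sends $P\in\mathscr P_n$ to $B[P](z)=\lambda_0P(z)+\lambda_1\frac{nz}{2}P'(z)+\lambda_2\left(\frac{nz}{2}\right)^2\frac{P''(z)}{2!}$. For a polynomial $P$ and a map $\rho$, $P\circ\rho$ denotes $z\mapsto P(\rho(z))$, and $B[P\circ\rho](z)$ is $B$ applied to the polynomial $P\circ\rho$, evaluated at $z$. For $k>0$, $R,r>0$ and $\alpha,\beta\in\mathbb C$: $\Phi_k(R,r,\alpha,\beta)=\beta\left\{\left(\frac{R+k}{k+r}\right)^n-|\alpha|\right\}-\alpha$; and $\sigma(z)=Rz$, $\rho(z)=rz$, $\tau(z)=Rz/k^2$,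 $\eta(z)=rz/k^2$. *)

theory Defs
  imports "HOL-Analysis.Analysis" "HOL-Computational_Algebra.Polynomial"
begin

definition Bop :: "nat \<Rightarrow> complex \<Rightarrow> complex \<Rightarrow> complex \<Rightarrow> complex poly \<Rightarrow> complex \<Rightarrow> complex" where
  "Bop n l0 l1 l2 P z =
     l0 * poly P z
     + l1 * (of_nat n * z / 2) * poly (pderiv P) z
     + l2 * (of_nat n * z / 2)^2 * poly (pderiv (pderiv P)) z / 2"

text \<open>The polynomial Q(z) = z^n conj(P(1/conj z)), written out coefficientwise:
  for P = sum a_j z^j (degree at most n), Q = sum conj(a_{n-j}) z^j.\<close>
definition reflQ :: "nat \<Rightarrow> complex poly \<Rightarrow> complex poly" where
  "reflQ n P = (\<Sum>j\<le>n. monom (cnj (coeff P (n - j))) j)"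

definition Phi :: "nat \<Rightarrow> real \<Rightarrow> real \<Rightarrow> real \<Rightarrow> complex \<Rightarrow> complex \<Rightarrow> complex" where
  "Phi n k R r \<alpha> \<beta> = \<beta> * of_real (((R + k) / (k + r)) ^ n - cmod \<alpha>) - \<alpha>"

definition scale :: "complex poly \<Rightarrow> real \<Rightarrow> complex poly" where
  "scale P c = pcompose P [:0, of_real c:]"

lemma reflQ_eval:
  assumes "degree P \<le> n" "z \<noteq> 0"
  shows "poly (reflQ n P) z = z ^ n * cnj (poly P (1 / cnj z))"
proof -
  have "poly (reflQ n P) z = (\<Sum>j\<le>n. cnj (coeff P (n - j)) * z ^ j)"
    by (simp add: reflQ_def poly_sum poly_monom)
  also have "\<dots> = (\<Sum>j\<le>n. cnj (coeff P j) * z ^ (n - j))"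
    by (rule sum.reindex_bij_witness[where i="\<lambda>j. n - j" and j="\<lambda>j. n - j"]) auto
  also have "\<dots> = z ^ n * (\<Sum>j\<le>n. cnj (coeff P j) * (1 / z) ^ j)"
    unfolding sum_distrib_left
    by (rule sum.cong) (use assms in \<open>auto simp: power_diff field_simps power_one_over\<close>)
  also have "(\<Sum>j\<le>n. cnj (coeff P j) * (1 / z) ^ j) = cnj (poly P (1 / cnj z))"
  proof -
    have "(\<Sum>j\<le>n. cnj (coeff P j) * (1 / z) ^ j) = (\<Sum>j\<le>degree P. cnj (coeff P j) * (1 / z) ^ j)"
      using assms(1) by (intro sum.mono_neutral_right) (auto simp: coeff_eq_0)
    thus ?thesis by (simp add: poly_altdef atMost_atLeast0 complex_cnj_divide)
  qed
  finally show ?thesis .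
qed

end

theory Submission
  imports Defs "HOL-Computational_Algebra.Fundamental_Theorem_Algebra"
begin


definition Psi :: "complex \<Rightarrow> real \<Rightarrow> complex \<Rightarrow> real" where
  "Psi u \<rho> t = 1 - 2 * Re (u * t) + ((cmod u)^2 - \<rho>^2) * (cmod t)^2"

lemma psi_inv:
  assumes "x \<noteq> 0"
  shows "Psi u \<rho> (1/x) * (cmod x)^2 = (cmod (u - x))^2 - \<rho>^2"
proof -
  have s: "(cmod x)^2 > 0" using assms by simp
  have inv: "1/x = cnj x / of_real ((cmod x)^2)"
  proof -
    have "x * cnj x = of_real ((cmod x)^2)" by (metis complex_norm_square of_real_power)
    thus ?thesis using assms s by (simp add: field_simps)
  qed
  have re: "Re (u * (1/x)) * (cmod x)^2 = Re (u * cnj x)"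
    using s unfolding inv by (simp add: Re_divide_of_real)
  have n1: "(cmod (1/x))^2 * (cmod x)^2 = 1"
    using assms by (simp add: norm_divide field_simps)
  have e: "(cmod (u - x))^2 = (cmod u)^2 - 2 * Re (u * cnj x) + (cmod x)^2"
    unfolding cmod_power2 by (simp add: power2_eq_square algebra_simps)
  have "Psi u \<rho> (1/x) * (cmod x)^2 = (cmod x)^2 - 2 * (Re (u * (1/x)) * (cmod x)^2)
          + ((cmod u)^2 - \<rho>^2) * ((cmod (1/x))^2 * (cmod x)^2)"
    unfolding Psi_def by (simp add: algebra_simps)
  also have "\<dots> = (cmod x)^2 - 2 * Re (u * cnj x) + ((cmod u)^2 - \<rho>^2)"
    by (simp only: re n1) simp
  finally show ?thesis using e by simp
qed

lemma norm_sq_convex: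
  fixes t1 t2 :: complex and \<theta> :: real
  assumes "0 \<le> \<theta>" "\<theta> \<le> 1"
  shows "(cmod (of_real \<theta> * t1 + of_real (1-\<theta>) * t2))^2 \<le> \<theta> * (cmod t1)^2 + (1-\<theta>) * (cmod t2)^2"
proof -
  have "\<theta> * (cmod t1)^2 + (1-\<theta>) * (cmod t2)^2 - (cmod (of_real \<theta> * t1 + of_real (1-\<theta>) * t2))^2
        = \<theta> * (1-\<theta>) * (cmod (t1 - t2))^2"
    unfolding cmod_power2 by (simp add: power2_eq_square algebra_simps)
  moreover have "\<theta> * (1-\<theta>) * (cmod (t1 - t2))^2 \<ge> 0" using assms by simp
  ultimately show ?thesis by linarith
qed

lemma psi_convex:
  assumes "0 \<le> \<theta>" "\<theta> \<le> 1" "cmod u \<le> \<rho>" "Psi u \<rho> t1 > 0" "Psi u \<rho> t2 > 0"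
  shows "Psi u \<rho> (of_real \<theta> * t1 + of_real (1-\<theta>) * t2) > 0"
proof -
  let ?d = "(cmod u)^2 - \<rho>^2"
  have d: "?d \<le> 0" using assms(3) norm_ge_zero by (smt (verit) power_mono)
  have lin: "Re (u * (of_real \<theta> * t1 + of_real (1-\<theta>) * t2)) = \<theta> * Re (u*t1) + (1-\<theta>) * Re (u*t2)"
    by (simp add: algebra_simps)
  have "?d * (cmod (of_real \<theta> * t1 + of_real (1-\<theta>) * t2))^2 \<ge> ?d * (\<theta> * (cmod t1)^2 + (1-\<theta>) * (cmod t2)^2)"
    using norm_sq_convex[OF assms(1,2)] d by (simp add: mult_left_mono_neg)
  hence "Psi u \<rho> (of_real \<theta> * t1 + of_real (1-\<theta>) * t2) \<ge> \<theta> * Psi u \<rho> t1 + (1-\<theta>) * Psi u \<rho> t2"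
    unfolding Psi_def lin by (simp add: algebra_simps)
  moreover have "\<theta> * Psi u \<rho> t1 + (1-\<theta>) * Psi u \<rho> t2 > 0"
  proof (cases "\<theta> = 0")
    case True thus ?thesis using assms by simp
  next
    case False
    hence "\<theta> * Psi u \<rho> t1 > 0" using assms by simp
    moreover have "(1-\<theta>) * Psi u \<rho> t2 \<ge> 0" using assms by simp
    ultimately show ?thesis by linarith
  qed
  ultimately show ?thesis by linarith
qed

lemma psi_root:
  assumes "\<rho> < cmod z" "u \<noteq> z" "0 \<le> \<rho>"
  shows "Psi u \<rho> (1/(u - z)) > 0"
proof -
  have "Psi u \<rho> (1/(u-z)) * (cmod (u-z))^2 = (cmod z)^2 - \<rho>^2"
    using psi_inv[of "u - z" u \<rho>] assms by simp
  moreover have "(cmod z)^2 - \<rho>^2 > 0" using assms by (simp add: power_strict_mono)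
  moreover have "(cmod (u-z))^2 > 0" using assms by simp
  ultimately show ?thesis by (metis zero_less_mult_pos2)
qed

lemma field_aux:
  fixes A D e c :: complex
  assumes "c \<noteq> 0" "c - 1 \<noteq> 0" "e \<noteq> 0" "A \<noteq> 0"
  shows "(e * D + A) / (c * (e * A)) = 1/c * (1/e) + (c-1)/c * (D/((c-1)*A))"
proof -
  have "(c-1)/c * (D/((c-1)*A)) = D / (c * A)" using assms by (simp add: field_simps)
  moreover have "(e * D + A) / (c * (e * A)) = 1/c * (1/e) + D / (c * A)"
    using assms by (simp add: field_simps)
  ultimately show ?thesis by simp
qed

lemma logderiv_psi_aux:
  "\<forall>\<phi> N. degree (\<phi>::complex poly) = d \<longrightarrow> (\<forall>w. cmod w \<le> \<rho> \<longrightarrow> poly \<phi> w \<noteq> 0) \<longrightarrow> cmod u \<le> \<rho>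
     \<longrightarrow> d \<le> N \<longrightarrow> 1 \<le> N \<longrightarrow> Psi u \<rho> (poly (pderiv \<phi>) u / (of_nat N * poly \<phi> u)) > 0"
proof (induction d)
  case 0
  show ?case
  proof (intro allI impI)
    fix \<phi> :: "complex poly" and N :: nat
    assume "degree \<phi> = 0"
    hence "pderiv \<phi> = 0" by (simp add: pderiv_eq_0_iff)
    thus "Psi u \<rho> (poly (pderiv \<phi>) u / (of_nat N * poly \<phi> u)) > 0" by (simp add: Psi_def)
  qed
next
  case (Suc d)
  show ?case
  proof (intro allI impI)
    fix \<phi> :: "complex poly" and N :: nat
    assume deg: "degree \<phi> = Suc d" and nz: "\<forall>w. cmod w \<le> \<rho> \<longrightarrow> poly \<phi> w \<noteq> 0"
      and u: "cmod u \<le> \<rho>" and dN: "Suc d \<le> N" and N1: "1 \<le> N"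
    have "\<not> constant (poly \<phi>)" using deg by (simp add: constant_degree)
    then obtain z where z: "poly \<phi> z = 0" using fundamental_theorem_of_algebra by blast
    hence zr: "cmod z > \<rho>" using nz by force
    have "[:-z,1:] dvd \<phi>" using z by (simp add: poly_eq_0_iff_dvd)
    then obtain \<psi> where \<phi>: "\<phi> = [:-z,1:] * \<psi>" by (elim dvdE)
    have \<psi>0: "\<psi> \<noteq> 0" using \<phi> deg by auto
    have degpsi: "degree \<psi> = d" using deg \<psi>0 unfolding \<phi> by (subst (asm) degree_mult_eq) auto
    have nzpsi: "\<forall>w. cmod w \<le> \<rho> \<longrightarrow> poly \<psi> w \<noteq> 0" using nz \<phi> by auto
    have uz: "u \<noteq> z" using u zr by auto
    have r0: "0 \<le> \<rho>" using u norm_ge_zero order_trans by blast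
    have pu: "poly \<psi> u \<noteq> 0" using nzpsi u by auto
    have dphi: "poly (pderiv \<phi>) u = (u - z) * poly (pderiv \<psi>) u + poly \<psi> u"
    proof -
      have d1: "pderiv [:-z,1:] = 1" by (simp add: pderiv_pCons)
      show ?thesis unfolding \<phi> pderiv_mult d1 by (simp add: algebra_simps)
    qed
    have phiu: "poly \<phi> u = (u - z) * poly \<psi> u" unfolding \<phi> by (simp add: algebra_simps)
    show "Psi u \<rho> (poly (pderiv \<phi>) u / (of_nat N * poly \<phi> u)) > 0"
    proof (cases "N = 1")
      case True
      hence "d = 0" using dN by simp
      hence "pderiv \<psi> = 0" using degpsi by (simp add: pderiv_eq_0_iff)
      hence "poly (pderiv \<phi>) u / (of_nat N * poly \<phi> u) = 1/(u - z)"
        using True pu uz \<open>pderiv \<psi> = 0\<close> unfolding dphi phiu by (simp add: field_simps)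
      thus ?thesis using psi_root[OF zr uz r0] by simp
    next
      case False
      hence N2: "N \<ge> 2" using N1 by simp
      have IH: "Psi u \<rho> (poly (pderiv \<psi>) u / (of_nat (N-1) * poly \<psi> u)) > 0"
        using Suc.IH[rule_format, of \<psi> "N-1", OF degpsi _ u] nzpsi dN N2 by simp
      define \<theta> where "\<theta> = 1 / real N"
      have th: "0 \<le> \<theta>" "\<theta> \<le> 1" using N1 by (auto simp: \<theta>_def)
      have Nm1: "of_nat (N - 1) = (of_nat N - 1 :: complex)" using N1 by (simp add: of_nat_diff)
      define c where "c = (of_nat N :: complex)"
      have c0: "c \<noteq> 0" "c - 1 \<noteq> 0" using N2 by (auto simp: c_def)
      have t1: "of_real \<theta> = 1 / c" by (simp add: \<theta>_def c_def)
      have t2: "of_real (1 - \<theta>) = (c - 1) / c" using c0 by (simp add: \<theta>_def c_def field_simps)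
      have "poly (pderiv \<phi>) u / (of_nat N * poly \<phi> u)
          = of_real \<theta> * (1/(u - z)) + of_real (1-\<theta>) * (poly (pderiv \<psi>) u / (of_nat (N-1) * poly \<psi> u))"
        unfolding dphi phiu t1 t2 Nm1 c_def[symmetric] using c0 uz pu
        by (intro field_aux) auto
      thus ?thesis using psi_convex[OF th u psi_root[OF zr uz r0] IH] by simp
    qed
  qed
qed

lemma laguerre:
  fixes \<phi> :: "complex poly"
  assumes "\<forall>w. cmod w \<le> \<rho> \<longrightarrow> poly \<phi> w \<noteq> 0" "cmod u \<le> \<rho>" "cmod a \<le> \<rho>"
    "degree \<phi> \<le> N" "1 \<le> N"
  shows "of_nat N * poly \<phi> u + (a - u) * poly (pderiv \<phi>) u \<noteq> 0"
proof
  assume eq: "of_nat N * poly \<phi> u + (a - u) * poly (pderiv \<phi>) u = 0"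
  have pu: "poly \<phi> u \<noteq> 0" using assms by auto
  have ua: "u \<noteq> a" using eq pu assms(5) by auto
  have "poly (pderiv \<phi>) u / (of_nat N * poly \<phi> u) = 1 / (u - a)"
    using eq pu ua assms(5) by (simp add: field_simps)
  moreover have "Psi u \<rho> (poly (pderiv \<phi>) u / (of_nat N * poly \<phi> u)) > 0"
    using logderiv_psi_aux[of "degree \<phi>" \<rho> u] assms by blast
  ultimately have P: "Psi u \<rho> (1/(u - a)) > 0" by simp
  have "Psi u \<rho> (1/(u-a)) * (cmod (u-a))^2 = (cmod a)^2 - \<rho>^2"
    using psi_inv[of "u - a" u \<rho>] ua by simp
  moreover have "(cmod a)^2 - \<rho>^2 \<le> 0" using assms(3) by (simp add: power_mono)
  moreover have "(cmod (u-a))^2 > 0" using ua by simp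
  ultimately show False using P by (smt (verit) mult_pos_pos)
qed

definition Lf :: "complex \<Rightarrow> complex \<Rightarrow> complex \<Rightarrow> complex \<Rightarrow> complex poly \<Rightarrow> complex" where
  "Lf z0 a b c F = a * poly F z0 + b * poly (pderiv F) z0 + c * poly (pderiv (pderiv F)) z0"

definition Lam :: "complex \<Rightarrow> nat \<Rightarrow> complex \<Rightarrow> complex \<Rightarrow> complex \<Rightarrow> complex \<Rightarrow> complex" where
  "Lam z0 N a b c u = a*(z0-u)^N + b* of_nat N*(z0-u)^(N-1) + c* of_nat (N*(N-1))*(z0-u)^(N-2)"

definition lamp :: "complex \<Rightarrow> nat \<Rightarrow> complex \<Rightarrow> complex \<Rightarrow> complex \<Rightarrow> complex poly" where
  "lamp z0 N a b c = smult a ([:z0,-1:]^N) + smult (b* of_nat N) ([:z0,-1:]^(N-1))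
     + smult (c* of_nat (N*(N-1))) ([:z0,-1:]^(N-2))"

lemma poly_lamp: "poly (lamp z0 N a b c) u = Lam z0 N a b c u"
  by (simp add: lamp_def Lam_def)

lemma degree_lamp: "degree (lamp z0 N a b c) \<le> N"
proof -
  have d: "degree ([:z0,-1:]^m) \<le> m" for m
    using degree_power_le[of "[:z0,-1:]" m] by simp
  show ?thesis unfolding lamp_def
    by (intro degree_add_le order.trans[OF degree_smult_le]) (use d[of N] d[of "N-1"] d[of "N-2"] in auto)
qed

lemma pderiv_lamp:
  "poly (pderiv (lamp z0 (Suc n) a b c)) u = - of_nat (Suc n) * Lam z0 n a b c u"
proof -
  have pq: "pderiv ([:z0,-1:]^Suc m) = smult (of_nat (Suc m)) ([:z0,-1:]^m) * [:-1:]" for m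
    unfolding pderiv_power_Suc by (simp add: pderiv_pCons)
  show ?thesis
  proof (cases n)
    case 0 thus ?thesis by (simp add: lamp_def Lam_def pderiv_pCons)
  next
    case (Suc m)
    show ?thesis
    proof (cases m)
      case 0 thus ?thesis using Suc
        by (simp add: lamp_def Lam_def pderiv_add pderiv_smult pq pderiv_pCons algebra_simps)
    next
      case (Suc j)
      hence "n = Suc (Suc j)" using \<open>n = Suc m\<close> by simp
      thus ?thesis
        by (simp add: lamp_def Lam_def pderiv_add pderiv_smult pq del: power_Suc)
           (simp add: algebra_simps)
    qed
  qed
qed

lemma Lf_mult:
  "Lf z0 a b c ([:-w0,1:] * G) = Lf z0 (a*(z0-w0)+b) (b*(z0-w0)+2*c) (c*(z0-w0)) G"
proof -
  have d1: "pderiv [:-w0,1:] = 1" by (simp add: pderiv_pCons)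
  show ?thesis unfolding Lf_def pderiv_mult d1 pderiv_add
    by (simp add: algebra_simps pderiv_mult d1)
qed

lemma Lf_smult: "Lf z0 a b c (smult s F) = s * Lf z0 a b c F"
  by (simp add: Lf_def pderiv_smult algebra_simps)

lemma Lam_step:
  "Lam z0 n (a*(z0-w0)+b) (b*(z0-w0)+2*c) (c*(z0-w0)) u
     = Lam z0 (Suc n) a b c u + (u - w0) * Lam z0 n a b c u"
proof (cases n)
  case 0 thus ?thesis by (simp add: Lam_def algebra_simps)
next
  case (Suc m)
  show ?thesis
  proof (cases m)
    case 0 thus ?thesis using Suc by (simp add: Lam_def algebra_simps)
  next
    case (Suc j)
    hence n: "n = Suc (Suc j)" using \<open>n = Suc m\<close> by simp
    define d where "d = z0 - u"
    have e: "u - w0 = (z0 - w0) - d" by (simp add: d_def)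
    show ?thesis unfolding n Lam_def d_def[symmetric] e
      by (simp add: algebra_simps)
  qed
qed

lemma walsh:
  assumes "0 \<le> \<rho>"
  shows "\<forall>a b c. (\<forall>w. cmod w \<le> \<rho> \<longrightarrow> Lam z0 (size M) a b c w \<noteq> 0) \<longrightarrow> (\<forall>x\<in>#M. cmod x \<le> \<rho>)
          \<longrightarrow> Lf z0 a b c (\<Prod>x\<in>#M. [:-x,1:]) \<noteq> 0"
proof (induction M)
  case empty
  show ?case
  proof (intro allI impI)
    fix a b c
    assume "\<forall>w. cmod w \<le> \<rho> \<longrightarrow> Lam z0 (size {#}) a b c w \<noteq> 0"
    hence "Lam z0 0 a b c 0 \<noteq> 0" using assms by simp
    thus "Lf z0 a b c (\<Prod>x\<in>#{#}. [:-x,1:]) \<noteq> 0" by (simp add: Lam_def Lf_def)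
  qed
next
  case (add w0 M)
  show ?case
  proof (intro allI impI)
    fix a b c
    assume H: "\<forall>w. cmod w \<le> \<rho> \<longrightarrow> Lam z0 (size (add_mset w0 M)) a b c w \<noteq> 0"
      and R: "\<forall>x\<in>#add_mset w0 M. cmod x \<le> \<rho>"
    let ?n = "size M"
    have w0: "cmod w0 \<le> \<rho>" using R by simp
    have H': "\<forall>w. cmod w \<le> \<rho> \<longrightarrow> poly (lamp z0 (Suc ?n) a b c) w \<noteq> 0"
      using H by (simp add: poly_lamp)
    have "\<forall>w. cmod w \<le> \<rho> \<longrightarrow> Lam z0 ?n (a*(z0-w0)+b) (b*(z0-w0)+2*c) (c*(z0-w0)) w \<noteq> 0"
    proof (intro allI impI)
      fix w assume w: "cmod w \<le> \<rho>"
      have "of_nat (Suc ?n) * poly (lamp z0 (Suc ?n) a b c) w + (w0 - w) * poly (pderiv (lamp z0 (Suc ?n) a b c)) w \<noteq> 0"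
        by (rule laguerre[OF H' w w0 degree_lamp]) simp
      hence "of_nat (Suc ?n) * (Lam z0 (Suc ?n) a b c w + (w - w0) * Lam z0 ?n a b c w) \<noteq> 0"
        unfolding poly_lamp pderiv_lamp by (simp add: algebra_simps)
      thus "Lam z0 ?n (a*(z0-w0)+b) (b*(z0-w0)+2*c) (c*(z0-w0)) w \<noteq> 0"
        unfolding Lam_step by auto
    qed
    hence "Lf z0 (a*(z0-w0)+b) (b*(z0-w0)+2*c) (c*(z0-w0)) (\<Prod>x\<in>#M. [:-x,1:]) \<noteq> 0"
      using add.IH R by simp
    thus "Lf z0 a b c (\<Prod>x\<in>#add_mset w0 M. [:-x,1:]) \<noteq> 0" by (simp only: image_mset_add_mset prod_mset.add_mset Lf_mult) simp
  qed
qed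



lemma sq_expand:
  fixes x y :: complex and R :: real
  shows "(cmod (of_real R * y - x))^2 = R^2 * (cmod y)^2 - 2*R*Re (x * cnj y) + (cmod x)^2"
  unfolding cmod_power2 by (simp add: power2_eq_square algebra_simps)

lemma factor_ineq:
  fixes x y :: complex and R r k :: real
  assumes "k > 0" "R > r" "r \<ge> k" "cmod x < k" "cmod y \<ge> 1"
  shows "(r+k) * cmod (of_real R * y - x) > (R+k) * cmod (of_real r * y - x)"
proof -
  define u where "u = cmod x"
  define v where "v = cmod y"
  define p where "p = Re (x * cnj y)"
  have pb: "p + u* v \<ge> 0"
  proof -
    have "\<bar>p\<bar> \<le> cmod (x * cnj y)" unfolding p_def by (rule abs_Re_le_cmod)
    thus ?thesis by (simp add: u_def v_def norm_mult)
  qed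
  have u0: "0 \<le> u" "u < k" using assms by (auto simp: u_def)
  have v1: "v \<ge> 1" using assms by (simp add: v_def)
  define A where "A = 2*R*r + k*R + k*r"
  define B where "B = R*r - k^2"
  define C where "C = R + r + 2*k"
  have B0: "B \<ge> 0"
  proof -
    have "k*k \<le> R*r" using assms by (intro mult_mono) auto
    thus ?thesis unfolding B_def by (simp add: power2_eq_square)
  qed
  have Apos: "A \<ge> 0" unfolding A_def using assms by simp
  have AB: "A \<ge> B"
  proof -
    have "A - B = R*r + k*R + k*r + k^2" unfolding A_def B_def by simp
    moreover have "R*r + k*R + k*r + k^2 \<ge> 0" using assms by simp
    ultimately show ?thesis by linarith
  qed
  have g: "v^2 * A - 2*B* v - C*k \<ge> 0"
  proof -
    have "v^2 * A - 2*B* v - C*k = (v - 1) * (A*(v+1) - 2*B)"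
      unfolding A_def B_def C_def by (simp add: power2_eq_square algebra_simps)
    moreover have "A*(v+1) \<ge> A*2" using Apos v1 by (intro mult_left_mono) auto
    hence "A*(v+1) - 2*B \<ge> 0" using AB by linarith
    ultimately show ?thesis using v1 by simp
  qed
  have f: "k* v^2*A + 2*B*p - C* u^2 > 0"
  proof -
    have "2*B*(p + u* v) \<ge> 0" using pb B0 by simp
    hence h1: "2*B*p + 2*B* u* v \<ge> 0" by (simp add: algebra_simps)
    have "2*B* v * u \<le> 2*B* v * k" using u0 B0 v1 by (intro mult_left_mono) auto
    hence h2: "2*B*k* v \<ge> 2*B* u* v" by (simp add: algebra_simps)
    have h3: "C* u^2 < C*k^2" using u0 assms unfolding C_def
      by (intro mult_strict_left_mono power_strict_mono) auto
    have "k * (v^2 * A - 2*B* v - C*k) \<ge> 0" using g assms(1) by simp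
    hence h4: "k* v^2*A - 2*B*k* v - C*k^2 \<ge> 0" by (simp add: algebra_simps power2_eq_square)
    show ?thesis using h1 h2 h3 h4 by linarith
  qed
  have E: "(r+k)^2 * (cmod (of_real R * y - x))^2 - (R+k)^2 * (cmod (of_real r * y - x))^2
        = (R - r) * (k* v^2*A + 2*B*p - C* u^2)"
    unfolding sq_expand A_def B_def C_def u_def[symmetric] v_def[symmetric] p_def[symmetric]
    by (simp add: power2_eq_square algebra_simps)
  have "(R - r) * (k* v^2*A + 2*B*p - C* u^2) > 0" using f assms by simp
  hence "((r+k) * cmod (of_real R * y - x))^2 > ((R+k) * cmod (of_real r * y - x))^2"
    using E by (simp add: power_mult_distrib)
  moreover have "(r+k) * cmod (of_real R * y - x) \<ge> 0" using assms by simp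
  ultimately show ?thesis by (rule power_less_imp_less_base)
qed



lemma poly_scale: "poly (scale F c) y = poly F (of_real c * y)"
  by (simp add: scale_def poly_pcompose mult.commute)

lemma Bop_lin: "Bop n l0 l1 l2 (A + smult s B') z = Bop n l0 l1 l2 A z + s * Bop n l0 l1 l2 B' z"
  by (simp add: Bop_def pderiv_add pderiv_smult algebra_simps)

lemma Bop_Lf: "Bop n l0 l1 l2 H z0 = Lf z0 l0 (l1*(of_nat n*z0/2)) (l2*(of_nat n*z0/2)^2/2) H"
  by (simp add: Bop_def Lf_def)

lemma prod_poly: "poly (\<Prod>x\<in>#M. [:-x,1:]) (y::complex) = (\<Prod>x\<in>#M. (y - x))"
proof (induction M)
  case (add x M)
  have "poly ([:-x,1:] * Q) y = (y - x) * poly Q y" for Q by (simp add: algebra_simps)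
  thus ?case using add by (simp add: left_diff_distrib)
qed simp

lemma prod_cmod_nonneg: "0 \<le> (\<Prod>x\<in>#M. cmod (g x))"
  by (induction M) auto

lemma norm_prod_mset': "cmod (\<Prod>x\<in>#M. f x) = (\<Prod>x\<in>#M. cmod (f x))"
  by (induction M) (auto simp: norm_mult)

lemma decomp: "(F::complex poly) \<noteq> 0 \<Longrightarrow> poly F y = lead_coeff F * (\<Prod>x\<in>#proots F. (y - x))"
  using arg_cong[OF complex_poly_decompose_multiset[of F], of "\<lambda>p. poly p y"]
  by (simp add: prod_poly)

lemma prod_ineq:
  fixes R r k :: real and y :: complex
  assumes "k > 0" "R > r" "r \<ge> k" "cmod y \<ge> 1"
  shows "(\<forall>x\<in>#M. cmod x < k) \<longrightarrow> M \<noteq> {#} \<longrightarrow>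
    (r+k)^size M * (\<Prod>x\<in>#M. cmod (of_real R * y - x)) > (R+k)^size M * (\<Prod>x\<in>#M. cmod (of_real r * y - x))"
proof (induction M)
  case empty thus ?case by simp
next
  case (add x M)
  show ?case
  proof (intro impI)
    assume h: "\<forall>x\<in>#add_mset x M. cmod x < k"
    have fx: "(r+k) * cmod (of_real R * y - x) > (R+k) * cmod (of_real r * y - x)"
      using factor_ineq[OF assms(1-3) _ assms(4)] h by simp
    show "(r+k)^size (add_mset x M) * (\<Prod>x\<in>#add_mset x M. cmod (of_real R * y - x))
        > (R+k)^size (add_mset x M) * (\<Prod>x\<in>#add_mset x M. cmod (of_real r * y - x))"
    proof (cases "M = {#}")
      case True thus ?thesis using fx by simp
    next
      case False
      hence IH: "(r+k)^size M * (\<Prod>x\<in>#M. cmod (of_real R * y - x)) > (R+k)^size M * (\<Prod>x\<in>#M. cmod (of_real r * y - x))"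
        using add.IH h by simp
      have "((r+k) * cmod (of_real R * y - x)) * ((r+k)^size M * (\<Prod>x\<in>#M. cmod (of_real R * y - x)))
          > ((R+k) * cmod (of_real r * y - x)) * ((R+k)^size M * (\<Prod>x\<in>#M. cmod (of_real r * y - x)))"
        by (rule mult_strict_mono'[OF fx IH]) (use assms in \<open>auto intro!: prod_cmod_nonneg mult_nonneg_nonneg\<close>)
      thus ?thesis by (simp add: algebra_simps)
    qed
  qed
qed

lemma lam_U:
  fixes n :: nat and l0 l1 l2 w z0 :: complex
  assumes n1: "n \<ge> 1"
    and U: "\<forall>w. l0 + of_nat n * l1 * w + of_nat n * (of_nat n - 1) / 2 * l2 * w ^ 2 = 0
              \<longrightarrow> cmod w \<le> cmod (w - of_nat n / 2)"
    and wz: "cmod w < cmod z0"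
  shows "Lam z0 n l0 (l1*(of_nat n*z0/2)) (l2*(of_nat n*z0/2)^2/2) w \<noteq> 0"
proof -
  define d where "d = z0 - w"
  have d0: "d \<noteq> 0" using wz d_def by auto
  define c0 where "c0 = of_nat n * z0 / 2"
  define v where "v = c0 / d"
  have vd: "v * d = c0" using d0 by (simp add: v_def)
  define Uv where "Uv = l0 + of_nat n * l1 * v + of_nat n * (of_nat n - 1) / 2 * l2 * v ^ 2"
  have eq: "Lam z0 n l0 (l1*c0) (l2*c0^2/2) w = d^n * Uv"
  proof (cases "n = 1")
    case True
    have "d^n * Uv = l0 * d + l1 * (v * d)" using True by (simp add: Uv_def algebra_simps)
    thus ?thesis using True by (simp add: Lam_def d_def[symmetric] vd)
  next
    case False
    define m where "m = n - 2"
    have m: "n = Suc (Suc m)" using False n1 by (simp add: m_def)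
    have e1: "d^n * v = c0 * d^(Suc m)" using vd m by (simp add: algebra_simps)
    have "d^n * v^2 = d^m * (v * d)^2" unfolding m by (simp add: power2_eq_square mult_ac)
    hence e2: "d^n * v^2 = c0^2 * d^m" using vd by (simp add: mult.commute)
    have nm: "of_nat n - 1 = (of_nat (Suc m) :: complex)" using m by simp
    have "d^n * Uv = l0 * d^n + of_nat n * l1 * (d^n * v) + of_nat n * (of_nat n - 1) / 2 * l2 * (d^n * v^2)"
      by (simp add: Uv_def algebra_simps)
    also have "\<dots> = l0 * d^n + of_nat n * l1 * c0 * d^(Suc m) + of_nat n * of_nat (Suc m) / 2 * l2 * c0^2 * d^m"
      unfolding e1 e2 nm by (simp add: algebra_simps)
    finally have "d^n * Uv = l0 * d^n + of_nat n * l1 * c0 * d^(Suc m) + of_nat n * of_nat (Suc m) / 2 * l2 * c0^2 * d^m" .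
    moreover have "Lam z0 n l0 (l1*c0) (l2*c0^2/2) w = l0 * d^n + l1 * c0 * of_nat n * d^(Suc m) + l2*c0^2/2 * of_nat (n * Suc m) * d^m"
      unfolding Lam_def d_def[symmetric] using m by simp
    ultimately show ?thesis by (simp add: algebra_simps)
  qed
  have "Uv \<noteq> 0"
  proof
    assume "Uv = 0"
    hence le: "cmod v \<le> cmod (v - of_nat n / 2)" using U unfolding Uv_def by blast
    have "v - of_nat n / 2 = (c0 - of_nat n / 2 * d) / d" using d0 by (simp add: v_def diff_divide_distrib)
    also have "c0 - of_nat n / 2 * d = of_nat n / 2 * w" by (simp add: c0_def d_def right_diff_distrib)
    finally have "cmod (v - of_nat n / 2) = real n / 2 * cmod w / cmod d" by (simp add: norm_mult norm_divide)
    moreover have "cmod v = real n / 2 * cmod z0 / cmod d" unfolding v_def c0_def by (simp add: norm_mult norm_divide)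
    moreover have "real n / 2 * cmod w / cmod d < real n / 2 * cmod z0 / cmod d"
      using n1 wz d0 by (intro divide_strict_right_mono mult_strict_left_mono) auto
    ultimately show False using le by simp
  qed
  thus ?thesis using eq d0 by (simp add: c0_def)
qed


lemma chain:
  fixes n :: nat and k R r :: real and l0 l1 l2 \<Phi> z0 :: complex and F :: "complex poly"
  assumes n1: "n \<ge> 1" and k0: "k > 0"
    and U: "\<forall>w. l0 + of_nat n * l1 * w + of_nat n * (of_nat n - 1) / 2 * l2 * w ^ 2 = 0
              \<longrightarrow> cmod w \<le> cmod (w - of_nat n / 2)"
    and Rr: "R > r" and rk: "r \<ge> k"
    and Phib: "cmod \<Phi> \<le> ((R + k) / (k + r)) ^ n"
    and degF: "degree F = n" and nzF: "\<forall>w. k \<le> cmod w \<longrightarrow> poly F w \<noteq> 0"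
    and z0: "1 \<le> cmod z0"
  shows "Bop n l0 l1 l2 (scale F R) z0 + \<Phi> * Bop n l0 l1 l2 (scale F r) z0 \<noteq> 0"
proof -
  define H where "H = scale F R + smult \<Phi> (scale F r)"
  have BH: "Bop n l0 l1 l2 (scale F R) z0 + \<Phi> * Bop n l0 l1 l2 (scale F r) z0 = Bop n l0 l1 l2 H z0"
    unfolding H_def Bop_lin ..
  have F0: "F \<noteq> 0" using degF n1 by auto
  define M where "M = proots F"
  have sizeM: "size M = n" using degF by (simp add: M_def size_proots_complex)
  have Mk: "\<forall>x\<in>#M. cmod x < k"
  proof
    fix x assume "x \<in># M"
    hence "poly F x = 0" using F0 by (simp add: M_def)
    thus "cmod x < k" using nzF by (meson not_le)
  qed
  have M0: "M \<noteq> {#}" using sizeM n1 by auto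
  have kr: "k + r > 0" using k0 rk by simp
  have Hnz: "poly H y \<noteq> 0" if y: "cmod y \<ge> 1" for y
  proof -
    have pr: "(r+k)^n * (\<Prod>x\<in>#M. cmod (of_real R * y - x)) > (R+k)^n * (\<Prod>x\<in>#M. cmod (of_real r * y - x))"
      using prod_ineq[OF k0 Rr rk y, of M] Mk M0 sizeM by simp
    define A where "A = cmod (poly F (of_real R * y))"
    define B where "B = cmod (poly F (of_real r * y))"
    have A: "A = cmod (lead_coeff F) * (\<Prod>x\<in>#M. cmod (of_real R * y - x))"
      unfolding A_def decomp[OF F0] M_def by (simp add: norm_mult norm_prod_mset')
    have B: "B = cmod (lead_coeff F) * (\<Prod>x\<in>#M. cmod (of_real r * y - x))"
      unfolding B_def decomp[OF F0] M_def by (simp add: norm_mult norm_prod_mset')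
    have lc: "cmod (lead_coeff F) > 0" using F0 by simp
    have "(r+k)^n * A > (R+k)^n * B"
      unfolding A B using pr lc by (simp add: algebra_simps)
    hence "A > ((R+k)/(k+r))^n * B" using kr by (simp add: field_simps power_divide add.commute)
    moreover have "cmod \<Phi> * B \<le> ((R+k)/(k+r))^n * B" using Phib B_def by (simp add: mult_right_mono)
    ultimately have lt: "cmod \<Phi> * B < A" by linarith
    have "poly H y = poly F (of_real R * y) + \<Phi> * poly F (of_real r * y)"
      unfolding H_def by (simp add: poly_scale)
    moreover have "cmod (poly F (of_real R * y) + \<Phi> * poly F (of_real r * y)) \<ge> A - cmod \<Phi> * B"
      unfolding A_def B_def using norm_diff_ineq[of "poly F (of_real R * y)" "\<Phi> * poly F (of_real r * y)"]
      by (simp add: norm_mult)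
    ultimately show ?thesis using lt by auto
  qed
  have degH_le: "degree H \<le> n"
  proof -
    have d: "degree (scale F c) \<le> n" for c
      unfolding scale_def using degree_pcompose_le[of F "[:0, of_real c:]"] degF
      by (cases "c = 0") auto
    show ?thesis unfolding H_def
      by (rule degree_add_le[OF d order.trans[OF degree_smult_le d]])
  qed
  have cH: "coeff H n = lead_coeff F * (of_real R ^ n + \<Phi> * of_real r ^ n)"
    unfolding H_def scale_def using degF by (simp add: coeff_pcompose_linear algebra_simps)
  have "R^n + \<Phi> * r^n \<noteq> 0"
  proof
    assume h: "R^n + \<Phi> * r^n = 0"
    have r0: "r > 0" using k0 rk by simp
    have "(R+k)/(k+r) < R/r" using r0 Rr k0 kr by (simp add: field_simps)
    hence "((R+k)/(k+r))^n < (R/r)^n" using n1 kr k0 r0 Rr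
      by (intro power_strict_mono) (auto simp: add_pos_pos less_imp_le)
    hence "cmod \<Phi> < (R/r)^n" using Phib by simp
    hence "cmod \<Phi> * r^n < R^n" using r0 by (simp add: field_simps power_divide)
    moreover have "cmod (\<Phi> * r^n) = R^n"
    proof -
      from h have "\<Phi> * r^n = - (R^n)" by (simp add: add_eq_0_iff)
      hence "cmod (\<Phi> * r^n) = cmod (of_real (R^n) :: complex)" by simp
      moreover have "cmod (complex_of_real R ^ n) = R^n" using Rr r0 by (simp add: norm_power)
      ultimately show ?thesis by simp
    qed
    ultimately show False using r0 by (simp add: norm_mult norm_power)
  qed
  hence cH0: "coeff H n \<noteq> 0" unfolding cH using F0
    by (metis mult_eq_0_iff leading_coeff_0_iff of_real_power)
  have degH: "degree H = n" using degH_le cH0 le_degree le_antisym by blast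
  have H0: "H \<noteq> 0" using cH0 by auto
  define N where "N = proots H"
  have sizeN: "size N = n" using degH by (simp add: N_def size_proots_complex)
  have N1: "\<forall>x\<in>#N. cmod x < 1"
  proof
    fix x assume "x \<in># N"
    hence "poly H x = 0" using H0 by (simp add: N_def)
    thus "cmod x < 1" using Hnz by (meson not_le)
  qed
  define \<rho> where "\<rho> = Max (insert 0 (cmod ` set_mset N))"
  have fin: "finite (insert 0 (cmod ` set_mset N))" by simp
  have \<rho>0: "0 \<le> \<rho>" unfolding \<rho>_def using fin by (simp add: Max_ge)
  have \<rho>1: "\<rho> < 1" unfolding \<rho>_def using fin N1 by (subst Max_less_iff) auto
  have N\<rho>: "\<forall>x\<in>#N. cmod x \<le> \<rho>" unfolding \<rho>_def using fin by (auto intro: Max_ge)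
  have Lnz: "\<forall>w. cmod w \<le> \<rho> \<longrightarrow> Lam z0 (size N) l0 (l1*(of_nat n*z0/2)) (l2*(of_nat n*z0/2)^2/2) w \<noteq> 0"
    using lam_U[OF n1 U] \<rho>1 z0 sizeN by force
  have "Lf z0 l0 (l1*(of_nat n*z0/2)) (l2*(of_nat n*z0/2)^2/2) (\<Prod>x\<in>#N. [:-x,1:]) \<noteq> 0"
    using walsh[OF \<rho>0] Lnz N\<rho> by blast
  moreover have "H = smult (lead_coeff H) (\<Prod>x\<in>#N. [:-x,1:])"
    unfolding N_def using complex_poly_decompose_multiset[of H] by simp
  ultimately have "Bop n l0 l1 l2 H z0 \<noteq> 0"
    unfolding Bop_Lf using H0 by (metis Lf_smult leading_coeff_0_iff mult_eq_0_iff)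
  thus ?thesis using BH by simp
qed



lemma Bop_smult: "Bop n l0 l1 l2 (smult s A) z = s * Bop n l0 l1 l2 A z"
  by (simp add: Bop_def pderiv_smult algebra_simps)

lemma Bop_diff: "Bop n l0 l1 l2 (A - B') z = Bop n l0 l1 l2 A z - Bop n l0 l1 l2 B' z"
  by (simp add: Bop_def pderiv_diff diff_divide_distrib algebra_simps)

lemma coeff_reflQ: "coeff (reflQ n P) j = (if j \<le> n then cnj (coeff P (n - j)) else 0)"
  unfolding reflQ_def coeff_sum coeff_monom by (simp add: sum.delta)

lemma degree_reflQ: "degree (reflQ n P) \<le> n"
  by (rule degree_le) (simp add: coeff_reflQ)

lemma factor_ineq2:
  fixes w x :: complex and k :: real
  assumes "k \<le> cmod w" "k \<le> cmod x" "k > 0"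
  shows "k * cmod (w - x) \<le> cmod (of_real (k^2) - w * cnj x)"
proof -
  have e: "(cmod (of_real (k^2) - w * cnj x))^2 - (k * cmod (w - x))^2
         = ((cmod x)^2 - k^2) * ((cmod w)^2 - k^2)"
    unfolding power_mult_distrib cmod_power2 by (simp add: power2_eq_square algebra_simps)
  have "((cmod x)^2 - k^2) * ((cmod w)^2 - k^2) \<ge> 0"
    using assms by (intro mult_nonneg_nonneg) (auto simp: power_mono)
  hence "(k * cmod (w - x))^2 \<le> (cmod (of_real (k^2) - w * cnj x))^2" using e by linarith
  thus ?thesis by (rule power2_le_imp_le) simp
qed

lemma prod_gt_pow:
  fixes k :: real
  assumes "k > 0"
  shows "(\<forall>x\<in>#M. cmod x > k) \<longrightarrow> M \<noteq> {#} \<longrightarrow> (\<Prod>x\<in>#M. cmod x) > k ^ size M"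
proof (induction M)
  case empty thus ?case by simp
next
  case (add x M)
  show ?case
  proof (intro impI)
    assume h: "\<forall>x\<in>#add_mset x M. k < cmod x"
    show "(\<Prod>x\<in>#add_mset x M. cmod x) > k ^ size (add_mset x M)"
    proof (cases "M = {#}")
      case True thus ?thesis using h by simp
    next
      case False
      hence "(\<Prod>x\<in>#M. cmod x) > k ^ size M" using add.IH h by simp
      moreover have "cmod x > k" using h by simp
      ultimately have "cmod x * (\<Prod>x\<in>#M. cmod x) > k * k ^ size M"
        using assms by (intro mult_strict_mono) auto
      thus ?thesis by simp
    qed
  qed
qed

lemma prod_refl_ineq:
  fixes k :: real and w :: complex
  assumes "k > 0" "k \<le> cmod w"
  shows "(\<forall>x\<in>#M. k \<le> cmod x) \<longrightarrow>
    (k / cmod w) ^ size M * (\<Prod>x\<in>#M. cmod (w - x)) \<le> (\<Prod>x\<in>#M. cmod (of_real (k^2) / w - cnj x))"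
proof (induction M)
  case empty thus ?case by simp
next
  case (add x M)
  show ?case
  proof
    assume h: "\<forall>x\<in>#add_mset x M. k \<le> cmod x"
    have w0: "w \<noteq> 0" "cmod w > 0" using assms by auto
    have f: "k / cmod w * cmod (w - x) \<le> cmod (of_real (k^2) / w - cnj x)"
    proof -
      have "of_real (k^2) / w - cnj x = (of_real (k^2) - w * cnj x) / w" using w0 by (simp add: field_simps)
      hence "cmod (of_real (k^2) / w - cnj x) = cmod (of_real (k^2) - w * cnj x) / cmod w"
        by (simp add: norm_divide)
      moreover have "k * cmod (w - x) \<le> cmod (of_real (k^2) - w * cnj x)"
        using factor_ineq2[OF assms(2) _ assms(1)] h by simp
      ultimately show ?thesis using w0 by (simp add: divide_right_mono)
    qed
    have IH: "(k / cmod w) ^ size M * (\<Prod>x\<in>#M. cmod (w - x)) \<le> (\<Prod>x\<in>#M. cmod (of_real (k^2) / w - cnj x))"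
      using add.IH h by simp
    have "(k / cmod w * cmod (w - x)) * ((k / cmod w) ^ size M * (\<Prod>x\<in>#M. cmod (w - x)))
        \<le> cmod (of_real (k^2) / w - cnj x) * (\<Prod>x\<in>#M. cmod (of_real (k^2) / w - cnj x))"
      by (rule mult_mono[OF f IH]) (use assms in \<open>auto intro!: mult_nonneg_nonneg prod_cmod_nonneg\<close>)
    thus "(k / cmod w) ^ size (add_mset x M) * (\<Prod>x\<in>#add_mset x M. cmod (w - x))
        \<le> (\<Prod>x\<in>#add_mset x M. cmod (of_real (k^2) / w - cnj x))"
      by (simp add: algebra_simps)
  qed
qed

lemma strict_thm:
  fixes n :: nat and k R r :: real and l0 l1 l2 \<alpha> \<beta> z :: complex and P :: "complex poly"
  assumes n1: "n \<ge> 1" and k0: "k > 0"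
    and U: "\<forall>w. l0 + of_nat n * l1 * w + of_nat n * (of_nat n - 1) / 2 * l2 * w ^ 2 = 0
              \<longrightarrow> cmod w \<le> cmod (w - of_nat n / 2)"
    and degP: "degree P \<le> n"
    and nzP: "\<forall>w. cmod w \<le> k \<longrightarrow> poly P w \<noteq> 0"
    and a1: "cmod \<alpha> \<le> 1" and b1: "cmod \<beta> \<le> 1"
    and Rr: "R > r" and rk: "r \<ge> k"
    and z1: "cmod z \<ge> 1"
  shows "cmod (Bop n l0 l1 l2 (scale P R) z + Phi n k R r \<alpha> \<beta> * Bop n l0 l1 l2 (scale P r) z)
     \<le> k ^ n * cmod (Bop n l0 l1 l2 (scale (reflQ n P) (R / k^2)) z
                     + Phi n k R r \<alpha> \<beta> * Bop n l0 l1 l2 (scale (reflQ n P) (r / k^2)) z)"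
proof -
  define \<Phi> where "\<Phi> = Phi n k R r \<alpha> \<beta>"
  define M1 where "M1 = ((R + k) / (k + r)) ^ n"
  have kr: "k + r > 0" using k0 rk by simp
  have M1ge: "M1 \<ge> 1" unfolding M1_def using kr Rr by (intro one_le_power) simp
  have Phib: "cmod \<Phi> \<le> ((R + k) / (k + r)) ^ n"
  proof -
    have nn: "M1 - cmod \<alpha> \<ge> 0" using M1ge a1 by simp
    have "cmod \<Phi> \<le> cmod (\<beta> * of_real (M1 - cmod \<alpha>)) + cmod \<alpha>"
      unfolding \<Phi>_def Phi_def M1_def[symmetric] by (rule norm_triangle_ineq4)
    also have "cmod (\<beta> * of_real (M1 - cmod \<alpha>)) = cmod \<beta> * (M1 - cmod \<alpha>)"
    proof -
      have "cmod (of_real (M1 - cmod \<alpha>) :: complex) = M1 - cmod \<alpha>"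
        by (subst norm_of_real) (rule abs_of_nonneg[OF nn])
      thus ?thesis by (simp only: norm_mult)
    qed
    also have "cmod \<beta> * (M1 - cmod \<alpha>) \<le> M1 - cmod \<alpha>"
      using nn b1 by (simp add: mult_left_le_one_le)
    finally show ?thesis unfolding M1_def by simp
  qed
  define Q where "Q = reflQ n P"
  define G where "G = smult (of_real (k^n)) (pcompose Q [:0, of_real (1/k^2):])"
  have scaleG: "scale G c = smult (of_real (k^n)) (scale Q (c / k^2))" for c
  proof -
    have "pcompose [:0, of_real (1/k^2):] [:0, of_real c:] = [:0, of_real (c/k^2) :: complex:]"
      by (simp add: pcompose_pCons)
    thus ?thesis unfolding G_def scale_def pcompose_smult pcompose_assoc[symmetric] by simp
  qed
  have BG: "Bop n l0 l1 l2 (scale G c) z = of_real (k^n) * Bop n l0 l1 l2 (scale Q (c/k^2)) z" for c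
    unfolding scaleG Bop_smult ..
  define X where "X = Bop n l0 l1 l2 (scale P R) z + \<Phi> * Bop n l0 l1 l2 (scale P r) z"
  define Y where "Y = Bop n l0 l1 l2 (scale G R) z + \<Phi> * Bop n l0 l1 l2 (scale G r) z"
  have RHS: "k ^ n * cmod (Bop n l0 l1 l2 (scale Q (R / k^2)) z + \<Phi> * Bop n l0 l1 l2 (scale Q (r / k^2)) z) = cmod Y"
  proof -
    have "Y = of_real (k^n) * (Bop n l0 l1 l2 (scale Q (R / k^2)) z + \<Phi> * Bop n l0 l1 l2 (scale Q (r / k^2)) z)"
      unfolding Y_def BG by (simp add: algebra_simps)
    hence "cmod Y = cmod (of_real (k^n) :: complex) * cmod (Bop n l0 l1 l2 (scale Q (R / k^2)) z + \<Phi> * Bop n l0 l1 l2 (scale Q (r / k^2)) z)"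
      by (simp only: norm_mult)
    moreover have "cmod (of_real (k^n) :: complex) = k^n" using k0 by (subst norm_of_real) simp
    ultimately show ?thesis by simp
  qed
  have P0: "P \<noteq> 0" using nzP k0 by (metis norm_zero less_imp_le poly_0)
  have polyG: "poly G w = of_real (k^n) * ((w / of_real (k^2))^n * cnj (poly P (of_real (k^2) / cnj w)))"
    if w0: "w \<noteq> 0" for w
  proof -
    have "poly G w = of_real (k^n) * poly Q (w / of_real (k^2))"
      unfolding G_def by (simp add: poly_pcompose)
    also have "poly Q (w / of_real (k^2)) = (w / of_real (k^2))^n * cnj (poly P (1 / cnj (w / of_real (k^2))))"
      unfolding Q_def using w0 k0 by (intro reflQ_eval degP) simp
    also have "1 / cnj (w / of_real (k^2)) = of_real (k^2) / cnj w" by (simp add: complex_cnj_divide)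
    finally show ?thesis .
  qed
  have Gnz: "\<forall>w. k \<le> cmod w \<longrightarrow> poly G w \<noteq> 0"
  proof (intro allI impI)
    fix w assume w: "k \<le> cmod w"
    have w0: "w \<noteq> 0" using w k0 by auto
    have "cmod (of_real (k^2) / cnj w) = k^2 / cmod w" by (simp add: norm_divide norm_power)
    also have "\<dots> \<le> k" using w k0 by (simp add: divide_le_eq power2_eq_square mult_left_mono)
    finally have "poly P (of_real (k^2) / cnj w) \<noteq> 0" using nzP by blast
    thus "poly G w \<noteq> 0" unfolding polyG[OF w0] using w0 k0 by simp
  qed
  define MP where "MP = proots P"
  have sizeMP: "size MP = degree P" by (simp add: MP_def size_proots_complex)
  have MPk: "\<forall>x\<in>#MP. k < cmod x"
  proof
    fix x assume "x \<in># MP"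
    hence "poly P x = 0" using P0 by (simp add: MP_def)
    thus "k < cmod x" using nzP by (meson not_le)
  qed
  have PG: "cmod (poly P w) \<le> cmod (poly G w)" if w: "k \<le> cmod w" for w
  proof -
    have w0: "w \<noteq> 0" "cmod w > 0" using w k0 by auto
    define lc where "lc = cmod (lead_coeff P)"
    define m where "m = degree P"
    define pw where "pw = (\<Prod>x\<in>#MP. cmod (w - x))"
    define qw where "qw = (\<Prod>x\<in>#MP. cmod (of_real (k^2) / w - cnj x))"
    have lc0: "lc \<ge> 0" by (simp add: lc_def)
    have pwP: "cmod (poly P w) = lc * pw"
      unfolding lc_def pw_def decomp[OF P0] MP_def by (simp add: norm_mult norm_prod_mset')
    have "cmod (poly P (of_real (k^2) / cnj w)) = lc * (\<Prod>x\<in>#MP. cmod (of_real (k^2) / cnj w - x))"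
      unfolding lc_def decomp[OF P0] MP_def by (simp add: norm_mult norm_prod_mset')
    also have "(\<Prod>x\<in>#MP. cmod (of_real (k^2) / cnj w - x)) = qw"
    proof -
      have "cmod (of_real (k^2) / cnj w - x) = cmod (of_real (k^2) / w - cnj x)" for x
      proof -
        have "cmod (of_real (k^2) / cnj w - x) = cmod (cnj (of_real (k^2) / cnj w - x))" by (rule complex_mod_cnj[symmetric])
        also have "cnj (of_real (k^2) / cnj w - x) = of_real (k^2) / w - cnj x" by (simp add: complex_cnj_divide)
        finally show ?thesis .
      qed
      thus ?thesis unfolding qw_def by simp
    qed
    finally have Pq: "cmod (poly P (of_real (k^2) / cnj w)) = lc * qw" .
    have Gq: "cmod (poly G w) = (cmod w / k)^n * (lc * qw)"
    proof -
      have "cmod (poly G w) = k^n * ((cmod w / k^2)^n * (lc * qw))"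
        unfolding polyG[OF w0(1)] using k0 Pq by (simp add: norm_mult norm_power norm_divide)
      hence "cmod (poly G w) = (k^n * (cmod w / k^2)^n) * (lc * qw)" by (simp only: mult.assoc)
      also have "k^n * (cmod w / k^2)^n = (cmod w / k)^n"
        using k0 by (simp add: power_divide power2_eq_square power_mult_distrib field_simps)
      finally show ?thesis .
    qed
    have ineq: "(k / cmod w) ^ m * pw \<le> qw"
      using prod_refl_ineq[OF k0 w, of MP] MPk sizeMP unfolding pw_def qw_def m_def
      by (auto simp: less_imp_le)
    have mn: "m \<le> n" using degP m_def by simp
    have t1: "cmod w / k \<ge> 1" using w k0 by simp
    have "(cmod w / k)^n * (k / cmod w)^m = (cmod w / k)^(n - m)"
    proof -
      have "(cmod w / k)^n = (cmod w / k)^(n-m) * (cmod w / k)^m" using mn by (simp add: power_add[symmetric])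
      moreover have "(cmod w / k)^m * (k / cmod w)^m = 1" using k0 w0 by (simp add: power_mult_distrib[symmetric])
      ultimately show ?thesis by (simp add: mult.assoc)
    qed
    hence br: "(cmod w / k)^n * (k / cmod w)^m \<ge> 1" using t1 by (simp add: one_le_power)
    have pw0: "pw \<ge> 0" unfolding pw_def by (rule prod_cmod_nonneg)
    have "lc * pw \<le> lc * (((cmod w / k)^n * (k / cmod w)^m) * pw)"
      using br pw0 lc0 by (simp add: mult_left_mono mult_le_cancel_right1 mult_right_mono)
    also have "\<dots> = (cmod w / k)^n * (lc * ((k / cmod w)^m * pw))" by (simp add: algebra_simps)
    also have "\<dots> \<le> (cmod w / k)^n * (lc * qw)"
      using ineq lc0 t1 by (intro mult_left_mono) auto
    finally show ?thesis unfolding pwP Gq .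
  qed
  define c0 where "c0 = coeff P 0"
  have c00: "c0 \<noteq> 0" unfolding c0_def using nzP k0 by (metis poly_0_coeff_0 norm_zero less_imp_le)
  have kk: "k^n * (1/k^2)^n = 1/k^n" using k0 by (simp add: power_divide power2_eq_square power_mult_distrib field_simps)
  have coeffG: "coeff G n = cnj c0 / of_real (k^n)"
  proof -
    have "coeff G n = of_real (k^n) * (of_real (1/k^2))^n * cnj c0"
      unfolding G_def Q_def c0_def by (simp add: coeff_pcompose_linear coeff_reflQ)
    also have "of_real (k^n) * (of_real (1/k^2))^n = (of_real (1/k^n) :: complex)"
      using kk by (metis of_real_mult of_real_power)
    finally show ?thesis by (simp add: divide_inverse mult.commute)
  qed
  have degG_le: "degree G \<le> n"
  proof -
    have "degree (pcompose Q [:0, of_real (1/k^2):]) \<le> degree Q * degree [:0, of_real (1/k^2) :: complex:]"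
      by (rule degree_pcompose_le)
    also have "\<dots> \<le> n" using degree_reflQ[of n P] unfolding Q_def by simp
    finally show ?thesis unfolding G_def using degree_smult_le order.trans by blast
  qed
  have degG: "degree G = n"
    using degG_le coeffG c00 k0 le_degree[of G n] by (simp add: le_antisym)
  have cPn: "cmod (coeff P n) * k^n < cmod c0"
  proof (cases "degree P = n")
    case False
    hence "coeff P n = 0" using degP by (simp add: coeff_eq_0)
    thus ?thesis using c00 by simp
  next
    case True
    have "c0 = poly P 0" by (simp add: c0_def poly_0_coeff_0)
    also have "\<dots> = lead_coeff P * (\<Prod>x\<in>#MP. (0 - x))" unfolding decomp[OF P0] MP_def ..
    finally have "cmod c0 = cmod (lead_coeff P) * (\<Prod>x\<in>#MP. cmod x)" by (simp add: norm_mult norm_prod_mset')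
    moreover have "(\<Prod>x\<in>#MP. cmod x) > k^n"
      using prod_gt_pow[OF k0, of MP] MPk sizeMP True n1 by auto
    moreover have "cmod (lead_coeff P) > 0" using P0 by simp
    ultimately show ?thesis using True by (simp add: mult_strict_left_mono)
  qed
  have Y0: "Y \<noteq> 0" unfolding Y_def
    by (rule chain[OF n1 k0 U Rr rk Phib degG _ z1]) (use Gnz in auto)
  have "cmod X \<le> cmod Y"
  proof (rule ccontr)
    assume "\<not> cmod X \<le> cmod Y"
    hence XY: "cmod X > cmod Y" by simp
    define lam where "lam = X / Y"
    have l1': "cmod lam > 1" using XY Y0 by (simp add: lam_def norm_divide)
    define F where "F = P - smult lam G"
    have degF_le: "degree F \<le> n" unfolding F_def
      using degP degG_le degree_diff_le degree_smult_le order.trans by (metis (no_types, lifting))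
    have "coeff F n = coeff P n - lam * cnj c0 / of_real (k^n)" unfolding F_def by (simp add: coeffG)
    moreover have "cmod (lam * cnj c0 / of_real (k^n)) > cmod (coeff P n)"
    proof -
      have A: "cmod (lam * cnj c0 / of_real (k^n)) = cmod lam * cmod c0 / k^n" using k0 by (simp add: norm_mult norm_divide norm_power)
      have "cmod lam * cmod c0 > cmod c0" using l1' c00 by simp
      hence "cmod lam * cmod c0 > cmod (coeff P n) * k^n" using cPn by linarith
      hence "cmod (coeff P n) < cmod lam * cmod c0 / k^n" using k0 by (simp add: pos_less_divide_eq)
      thus ?thesis using A by simp
    qed
    ultimately have "coeff F n \<noteq> 0" by auto
    hence degF: "degree F = n" using degF_le le_degree le_antisym by blast
    have nzF: "\<forall>w. k \<le> cmod w \<longrightarrow> poly F w \<noteq> 0"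
    proof (intro allI impI)
      fix w assume w: "k \<le> cmod w"
      have "cmod (poly P w) \<le> cmod (poly G w)" by (rule PG[OF w])
      also have "\<dots> < cmod lam * cmod (poly G w)" using l1' Gnz w by simp
      finally have "cmod (poly P w) \<noteq> cmod (lam * poly G w)" by (simp add: norm_mult)
      thus "poly F w \<noteq> 0" unfolding F_def by auto
    qed
    have "Bop n l0 l1 l2 (scale F R) z + \<Phi> * Bop n l0 l1 l2 (scale F r) z \<noteq> 0"
      by (rule chain[OF n1 k0 U Rr rk Phib degF nzF z1])
    moreover have "Bop n l0 l1 l2 (scale F R) z + \<Phi> * Bop n l0 l1 l2 (scale F r) z = X - lam * Y"
      unfolding F_def X_def Y_def scale_def pcompose_diff pcompose_smult Bop_diff Bop_smult
      by (simp add: algebra_simps)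
    moreover have "X - lam * Y = 0" using Y0 by (simp add: lam_def)
    ultimately show False by simp
  qed
  thus ?thesis using RHS unfolding X_def \<Phi>_def Q_def by simp
qed



lemma Bop_scale_expl:
  "Bop n l0 l1 l2 (scale Q c) z = l0 * poly Q (of_real c * z)
     + l1 * (of_nat n * z / 2) * (of_real c * poly (pderiv Q) (of_real c * z))
     + l2 * (of_nat n * z / 2)^2 * ((of_real c)^2 * poly (pderiv (pderiv Q)) (of_real c * z)) / 2"
proof -
  have d: "pderiv [:0, of_real c:] = [:of_real c:]" by (simp add: pderiv_pCons)
  have d1: "pderiv (scale Q c) = pcompose (pderiv Q) [:0, of_real c:] * [:of_real c:]"
    unfolding scale_def pderiv_pcompose d ..
  have d2: "pderiv (pderiv (scale Q c)) = pcompose (pderiv (pderiv Q)) [:0, of_real c:] * [:of_real c:] * [:of_real c:]"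
    unfolding d1 pderiv_mult pderiv_pcompose d by simp
  show ?thesis unfolding Bop_def
    by (subst d2, subst d1) (simp add: scale_def poly_pcompose power2_eq_square algebra_simps)
qed

theorem lemma1p3:
  fixes n :: nat and k R r :: real and l0 l1 l2 \<alpha> \<beta> z :: complex and P :: "complex poly"
  assumes "n \<ge> 1" and "k > 0"
    and U: "\<forall>w. l0 + of_nat n * l1 * w + of_nat n * (of_nat n - 1) / 2 * l2 * w ^ 2 = 0
              \<longrightarrow> cmod w \<le> cmod (w - of_nat n / 2)"
    and "degree P \<le> n"
    and "\<forall>w. cmod w < k \<longrightarrow> poly P w \<noteq> 0"
    and "cmod \<alpha> \<le> 1" and "cmod \<beta> \<le> 1"
    and "R > r" and "r \<ge> k"
    and "cmod z \<ge> 1"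
  shows "cmod (Bop n l0 l1 l2 (scale P R) z + Phi n k R r \<alpha> \<beta> * Bop n l0 l1 l2 (scale P r) z)
     \<le> k ^ n * cmod (Bop n l0 l1 l2 (scale (reflQ n P) (R / k^2)) z
                     + Phi n k R r \<alpha> \<beta> * Bop n l0 l1 l2 (scale (reflQ n P) (r / k^2)) z)"
proof -
  note a = assms
  define f where "f = (\<lambda>\<kappa>::real. \<kappa> ^ n * cmod (Bop n l0 l1 l2 (scale (reflQ n P) (R / \<kappa>^2)) z
                     + Phi n \<kappa> R r \<alpha> \<beta> * Bop n l0 l1 l2 (scale (reflQ n P) (r / \<kappa>^2)) z)
       - cmod (Bop n l0 l1 l2 (scale P R) z + Phi n \<kappa> R r \<alpha> \<beta> * Bop n l0 l1 l2 (scale P r) z))"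
  have ev: "eventually (\<lambda>\<kappa>. 0 \<le> f \<kappa>) (at_left k)"
    using eventually_at_left_real[OF a(2)]
  proof (rule eventually_mono)
    fix \<kappa> assume "\<kappa> \<in> {0<..<k}"
    hence \<kappa>: "0 < \<kappa>" "\<kappa> < k" by auto
    have "cmod (Bop n l0 l1 l2 (scale P R) z + Phi n \<kappa> R r \<alpha> \<beta> * Bop n l0 l1 l2 (scale P r) z)
     \<le> \<kappa> ^ n * cmod (Bop n l0 l1 l2 (scale (reflQ n P) (R / \<kappa>^2)) z
                     + Phi n \<kappa> R r \<alpha> \<beta> * Bop n l0 l1 l2 (scale (reflQ n P) (r / \<kappa>^2)) z)"
      by (rule strict_thm[OF a(1) \<kappa>(1) U a(4) _ a(6,7,8) _ a(10)]) (use a \<kappa> in auto)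
    thus "0 \<le> f \<kappa>" unfolding f_def by simp
  qed
  have lim: "(f \<longlongrightarrow> f k) (at_left k)"
  proof -
    have kr: "(of_real k + of_real r :: complex) \<noteq> 0"
      using a(2,9) by (metis add_pos_pos of_real_add of_real_eq_0_iff less_le_trans less_irrefl)
    show ?thesis unfolding f_def Bop_scale_expl Phi_def using a(2,9) kr
      by (auto intro!: tendsto_eq_intros)
  qed
  have "0 \<le> f k" by (rule tendsto_lowerbound[OF lim ev]) simp
  thus ?thesis unfolding f_def by simp
qed


end
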